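(* Let $A,B$ be nonzero finite-dimensional $K$-subspaces of $L$. Then there exist nonzero finite-dimensional $K$-subspaces $E,F$ of $L$ such that: (1) $\langle EF\rangle\subset\langle AB\rangle$; (2) $\dim_KE+\dim_KF\geq\dim_KA+\dim_KB$; (3) $ED=E$ and $DF=F$, where $D=E_*^{-1}E\cap FF_*^{-1}$.
   Context: $K$ is a commutative field and $L$ is a (possibly noncommutative) division ring containing $K$ in its center. For $S\subset L$, $\langle S\rangle$ denotes the $K$-subspace of $L$ spanned by $S$. For subsets $S_1,S_2,\dots$ of $L$, $S_1S_2=\{s_1s_2\mid s_1\in S_1,s_2\in S_2\}$ (product set), and similarly for more factors. For $X\subset L$, $X_*=X\setminus\{0\}$ and $X_*^{-1}=\{x^{-1}\mid x\in X_*\}$. *)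

theory Defs
  imports Complex_Main
begin

text \<open>The commutative field K is a type of class field; it is embedded into the
  division ring L (a type of class division_ring) by a unital ring homomorphism
  phi whose image lies in the centre of L.\<close>

definition central_hom :: "('k::field \<Rightarrow> 'l::division_ring) \<Rightarrow> bool" where
  "central_hom \<phi> \<longleftrightarrow> \<phi> 1 = 1 \<and> (\<forall>a b. \<phi> (a + b) = \<phi> a + \<phi> b)
     \<and> (\<forall>a b. \<phi> (a * b) = \<phi> a * \<phi> b) \<and> (\<forall>c x. \<phi> c * x = x * \<phi> c)"

definition kscale :: "('k::field \<Rightarrow> 'l::division_ring) \<Rightarrow> 'k \<Rightarrow> 'l \<Rightarrow> 'l" where
  "kscale \<phi> c x = \<phi> c * x"

abbreviation kspan :: "('k::field \<Rightarrow> 'l::division_ring) \<Rightarrow> 'l set \<Rightarrow> 'l set" where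
  "kspan \<phi> S \<equiv> module.span (kscale \<phi>) S"

abbreviation kdim :: "('k::field \<Rightarrow> 'l::division_ring) \<Rightarrow> 'l set \<Rightarrow> nat" where
  "kdim \<phi> S \<equiv> vector_space.dim (kscale \<phi>) S"

definition fd_subspace :: "('k::field \<Rightarrow> 'l::division_ring) \<Rightarrow> 'l set \<Rightarrow> bool" where
  "fd_subspace \<phi> V \<longleftrightarrow> module.subspace (kscale \<phi>) V \<and> (\<exists>B. finite B \<and> V = kspan \<phi> B)"

definition setmul :: "'l::times set \<Rightarrow> 'l set \<Rightarrow> 'l set" where
  "setmul S T = {s * t | s t. s \<in> S \<and> t \<in> T}"

text \<open>X_*^{-1} = {x^{-1} | x in X, x ~= 0}.\<close>
definition invs :: "'l::division_ring set \<Rightarrow> 'l set" where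
  "invs X = inverse ` (X - {0})"

end

theory Submission imports Defs begin

locale kd = fixes \<phi> :: "'k::field \<Rightarrow> 'l::division_ring" assumes ch: "central_hom \<phi>"
begin

lemma phi_add: "\<phi> (a + b) = \<phi> a + \<phi> b" and phi_mult: "\<phi> (a * b) = \<phi> a * \<phi> b"
  and phi_one: "\<phi> 1 = 1" and phi_comm: "\<phi> c * x = x * \<phi> c"
  using ch unfolding central_hom_def by blast+

lemma vs: "vector_space (kscale \<phi>)"
  unfolding vector_space_def kscale_def
  by (simp add: distrib_left distrib_right phi_add phi_mult phi_one mult.assoc)

sublocale V: vector_space "kscale \<phi>" by (rule vs)

lemma hom_r: "module_hom (kscale \<phi>) (kscale \<phi>) (\<lambda>x. x * g)"
  unfolding module_hom_iff using V.module_axioms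
  by (simp add: kscale_def distrib_right mult.assoc)

lemma comm_l: "\<phi> c * (g * x) = g * (\<phi> c * x)"
proof -
  have "\<phi> c * (g * x) = (\<phi> c * g) * x" by (rule mult.assoc[symmetric])
  also have "\<phi> c * g = g * \<phi> c" by (rule phi_comm)
  finally show ?thesis by (simp only: mult.assoc)
qed

lemma hom_l: "module_hom (kscale \<phi>) (kscale \<phi>) (\<lambda>x. g * x)"
  unfolding module_hom_iff using V.module_axioms
  by (simp add: kscale_def distrib_left comm_l)

abbreviation fd where "fd U \<equiv> fd_subspace \<phi> U"

lemma fd_basis:
  assumes "fd U"
  obtains B where "finite B" "B \<subseteq> U" "V.independent B" "V.span B = U" "card B = V.dim U"
proof -
  from assms obtain T where T: "finite T" "U = V.span T" and sU: "V.subspace U"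
    unfolding fd_subspace_def by auto
  obtain B where B: "B \<subseteq> U" "V.independent B" "U \<subseteq> V.span B" "card B = V.dim U"
    by (rule V.basis_exists)
  have "finite B" using V.independent_span_bound[OF T(1) B(2)] B(1) T(2) by auto
  moreover have "V.span B = U" using B V.span_minimal[OF B(1) sU] by auto
  ultimately show ?thesis using that B by auto
qed

lemma sub_fd:
  assumes "fd W" "V.subspace U" "U \<subseteq> W"
  shows "fd U"
proof -
  obtain C where C: "finite C" "C \<subseteq> W" "V.independent C" "V.span C = W" "card C = V.dim W"
    using fd_basis[OF assms(1)] by blast
  obtain B where B: "B \<subseteq> U" "V.independent B" "U \<subseteq> V.span B" "card B = V.dim U"
    by (rule V.basis_exists)
  have "finite B" using V.independent_span_bound[OF C(1) B(2)] B(1) C assms(3) by auto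
  moreover have "V.span B = U" using B V.span_minimal[OF B(1) assms(2)] by auto
  ultimately show ?thesis unfolding fd_subspace_def using assms(2) by auto
qed

lemma indep_card_le:
  assumes "fd W" "V.independent S" "S \<subseteq> W"
  shows "finite S" "card S \<le> V.dim W"
proof -
  obtain C where C: "finite C" "C \<subseteq> W" "V.independent C" "V.span C = W" "card C = V.dim W"
    using fd_basis[OF assms(1)] by blast
  show "finite S" "card S \<le> V.dim W"
    using V.independent_span_bound[OF C(1) assms(2)] assms(3) C by auto
qed

lemma dim_mono:
  assumes "fd W" "U \<subseteq> W"
  shows "V.dim U \<le> V.dim W"
proof -
  obtain C where C: "finite C" "C \<subseteq> W" "V.independent C" "V.span C = W" "card C = V.dim W"
    using fd_basis[OF assms(1)] by blast
  show ?thesis using V.dim_le_card[of U C] C assms by auto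
qed

lemma dim_strict:
  assumes "fd W" "V.subspace U" "U \<subseteq> W" "U \<noteq> W"
  shows "V.dim U < V.dim W"
proof -
  have fU: "fd U" by (rule sub_fd[OF assms(1-3)])
  obtain B where B: "finite B" "B \<subseteq> U" "V.independent B" "V.span B = U" "card B = V.dim U"
    using fd_basis[OF fU] by blast
  obtain w where w: "w \<in> W" "w \<notin> U" using assms by auto
  have "V.independent (insert w B)" using B w by (simp add: V.independent_insert)
  then have "card (insert w B) \<le> V.dim W" using indep_card_le[OF assms(1)] B w assms(3) by auto
  moreover have "w \<notin> B" using B w V.span_superset[of B] by auto
  then have "card (insert w B) = Suc (card B)" using B(1) by simp
  ultimately show ?thesis using B by simp
qed

lemma fd_image_r:
  assumes "fd U" shows "fd ((\<lambda>x. x * g) ` U)"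
proof -
  interpret H: module_hom "kscale \<phi>" "kscale \<phi>" "\<lambda>x. x * g" by (rule hom_r)
  obtain B where B: "finite B" "V.span B = U" using fd_basis[OF assms] by metis
  have "V.subspace ((\<lambda>x. x * g) ` U)" using assms H.subspace_image unfolding fd_subspace_def by auto
  moreover have "(\<lambda>x. x * g) ` U = V.span ((\<lambda>x. x * g) ` B)" using H.span_image B by auto
  ultimately show ?thesis unfolding fd_subspace_def using B by blast
qed

lemma fd_image_l:
  assumes "fd U" shows "fd ((\<lambda>x. g * x) ` U)"
proof -
  interpret H: module_hom "kscale \<phi>" "kscale \<phi>" "\<lambda>x. g * x" by (rule hom_l)
  obtain B where B: "finite B" "V.span B = U" using fd_basis[OF assms] by metis
  have "V.subspace ((\<lambda>x. g * x) ` U)" using assms H.subspace_image unfolding fd_subspace_def by auto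
  moreover have "(\<lambda>x. g * x) ` U = V.span ((\<lambda>x. g * x) ` B)" using H.span_image B by auto
  ultimately show ?thesis unfolding fd_subspace_def using B by blast
qed

lemma dim_image_r_le:
  assumes "fd U" shows "V.dim ((\<lambda>x. x * g) ` U) \<le> V.dim U"
proof -
  interpret H: module_hom "kscale \<phi>" "kscale \<phi>" "\<lambda>x. x * g" by (rule hom_r)
  obtain B where B: "finite B" "V.span B = U" "card B = V.dim U" using fd_basis[OF assms] by metis
  have "(\<lambda>x. x * g) ` U = V.span ((\<lambda>x. x * g) ` B)" using H.span_image B by auto
  then have "V.dim ((\<lambda>x. x * g) ` U) \<le> card ((\<lambda>x. x * g) ` B)"
    by (intro V.dim_le_card[OF equalityD1 finite_imageI[OF B(1)]])
  also have "\<dots> \<le> card B" using B card_image_le by blast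
  finally show ?thesis using B by simp
qed

lemma dim_image_l_le:
  assumes "fd U" shows "V.dim ((\<lambda>x. g * x) ` U) \<le> V.dim U"
proof -
  interpret H: module_hom "kscale \<phi>" "kscale \<phi>" "\<lambda>x. g * x" by (rule hom_l)
  obtain B where B: "finite B" "V.span B = U" "card B = V.dim U" using fd_basis[OF assms] by metis
  have "(\<lambda>x. g * x) ` U = V.span ((\<lambda>x. g * x) ` B)" using H.span_image B by auto
  then have "V.dim ((\<lambda>x. g * x) ` U) \<le> card ((\<lambda>x. g * x) ` B)"
    by (intro V.dim_le_card[OF equalityD1 finite_imageI[OF B(1)]])
  also have "\<dots> \<le> card B" using B card_image_le by blast
  finally show ?thesis using B by simp
qed

lemma dim_image_r:
  assumes "fd U" "g \<noteq> 0" shows "V.dim ((\<lambda>x. x * g) ` U) = V.dim U"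
proof -
  have "(\<lambda>x. x * inverse g) ` ((\<lambda>x. x * g) ` U) = U"
    using assms(2) by (auto simp: image_image mult.assoc)
  then have "V.dim U \<le> V.dim ((\<lambda>x. x * g) ` U)"
    using dim_image_r_le[OF fd_image_r[OF assms(1)], of "inverse g" g] by simp
  with dim_image_r_le[OF assms(1), of g] show ?thesis by simp
qed

lemma dim_image_l:
  assumes "fd U" "g \<noteq> 0" shows "V.dim ((\<lambda>x. g * x) ` U) = V.dim U"
proof -
  have "(\<lambda>x. inverse g * x) ` ((\<lambda>x. g * x) ` U) = U"
    using assms(2) by (auto simp: image_image mult.assoc[symmetric])
  then have "V.dim U \<le> V.dim ((\<lambda>x. g * x) ` U)"
    using dim_image_l_le[OF fd_image_l[OF assms(1)], of "inverse g" g] by simp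
  with dim_image_l_le[OF assms(1), of g] show ?thesis by simp
qed

lemma fd_span_Un:
  assumes "fd U" "fd W" shows "fd (V.span (U \<union> W))"
proof -
  obtain BU where BU: "finite BU" "V.span BU = U" using fd_basis[OF assms(1)] by metis
  obtain BW where BW: "finite BW" "V.span BW = W" using fd_basis[OF assms(2)] by metis
  have "V.span (U \<union> W) = V.span (BU \<union> BW)"
    unfolding V.span_eq using BU BW V.span_mono[of BU "BU \<union> BW"] V.span_mono[of BW "BU \<union> BW"]
      V.span_superset[of "U \<union> W"] V.span_superset[of BU] V.span_superset[of BW] by blast
  then show ?thesis unfolding fd_subspace_def using BU BW by blast
qed

lemma grass:
  assumes fU: "fd U" and fW: "fd W"
  shows "V.dim U + V.dim W \<le> V.dim (V.span (U \<union> W)) + V.dim (U \<inter> W)"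
proof -
  have sU: "V.subspace U" and sW: "V.subspace W" using fU fW unfolding fd_subspace_def by auto
  have fI: "fd (U \<inter> W)" using sub_fd[OF fU V.subspace_inter[OF sU sW]] by auto
  obtain C where C: "finite C" "C \<subseteq> U \<inter> W" "V.independent C" "V.span C = U \<inter> W" "card C = V.dim (U \<inter> W)"
    using fd_basis[OF fI] by blast
  obtain BU where BU: "C \<subseteq> BU" "BU \<subseteq> U" "V.independent BU" "U \<subseteq> V.span BU"
    using V.maximal_independent_subset_extend[of C U] C by auto
  have BUf: "finite BU" using indep_card_le[OF fU BU(3,2)] by auto
  have BUc: "card BU = V.dim U" using V.basis_card_eq_dim BU by auto
  obtain BW where BW: "C \<subseteq> BW" "BW \<subseteq> W" "V.independent BW" "W \<subseteq> V.span BW"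
    using V.maximal_independent_subset_extend[of C W] C by auto
  have BWf: "finite BW" using indep_card_le[OF fW BW(3,2)] by auto
  have BWc: "card BW = V.dim W" using V.basis_card_eq_dim BW by auto
  define Q where "Q = BW - C"
  have spBU: "V.span BU = U" using BU V.span_minimal[OF BU(2) sU] by auto
  have notin: "q \<notin> V.span (C \<union> Q')" if "q \<in> BW" "q \<notin> C" "q \<notin> Q'" "Q' \<subseteq> BW" for q Q'
  proof -
    have "V.independent (insert q (C \<union> Q'))"
      using V.independent_mono[OF BW(3)] that BW(1) by auto
    then show ?thesis using that by (simp add: V.independent_insert)
  qed
  have disj: "BU \<inter> Q = {}"
  proof (rule ccontr)
    assume "BU \<inter> Q \<noteq> {}"
    then obtain q where q: "q \<in> BU" "q \<in> BW" "q \<notin> C" unfolding Q_def by auto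
    then have "q \<in> U \<inter> W" using BU BW by auto
    then have "q \<in> V.span (C \<union> {})" using C by simp
    with notin[OF q(2,3), of "{}"] show False by auto
  qed
  have key: "finite Q' \<Longrightarrow> Q' \<subseteq> Q \<Longrightarrow> V.independent (BU \<union> Q')" for Q'
  proof (induction Q' rule: finite_induct)
    case empty then show ?case using BU by simp
  next
    case (insert q Q'')
    have q: "q \<in> BW" "q \<notin> C" "q \<notin> Q''" "Q'' \<subseteq> BW" "q \<notin> BU"
      using insert disj unfolding Q_def by auto
    have "q \<notin> V.span (BU \<union> Q'')"
    proof
      assume "q \<in> V.span (BU \<union> Q'')"
      then obtain x y where xy: "q = x + y" "x \<in> V.span BU" "y \<in> V.span Q''"
        unfolding V.span_Un by auto
      have xU: "x \<in> U" using xy spBU by auto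
      have "V.span Q'' \<subseteq> W" using V.span_minimal[OF _ sW] q BW by blast
      then have yW: "y \<in> W" using xy by auto
      have "x = q - y" using xy by simp
      then have "x \<in> W" using V.subspace_diff[OF sW _ yW] q BW by auto
      then have "x \<in> V.span C" using xU C by auto
      then have "x \<in> V.span (C \<union> Q'')" using V.span_mono[of C "C \<union> Q''"] by auto
      moreover have "y \<in> V.span (C \<union> Q'')" using xy V.span_mono[of Q'' "C \<union> Q''"] by auto
      ultimately have "q \<in> V.span (C \<union> Q'')" using xy V.span_add by auto
      with notin[OF q(1-4)] show False by simp
    qed
    then show ?case using insert q by (simp add: V.independent_insert)
  qed
  have QF: "finite Q" using BWf unfolding Q_def by auto
  have ind: "V.independent (BU \<union> Q)" using key[OF QF] by simp
  have sub: "BU \<union> Q \<subseteq> V.span (U \<union> W)" using BU BW V.span_superset[of "U \<union> W"] unfolding Q_def by blast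
  have "card (BU \<union> Q) \<le> V.dim (V.span (U \<union> W))"
    using indep_card_le[OF fd_span_Un[OF fU fW] ind sub] by auto
  moreover have "card (BU \<union> Q) = card BU + card Q" using card_Un_disjoint[OF BUf QF disj] .
  moreover have "card Q = card BW - card C" unfolding Q_def using card_Diff_subset[OF C(1) BW(1)] .
  moreover have "card C \<le> card BW" using card_mono[OF BWf BW(1)] .
  ultimately show ?thesis using BUc BWc C(5) by linarith
qed

lemma span_setmul:
  assumes "fd U" "fd W" shows "fd (V.span (setmul U W))"
proof -
  obtain BU where BU: "finite BU" "BU \<subseteq> U" "V.span BU = U" using fd_basis[OF assms(1)] by metis
  obtain BW where BW: "finite BW" "BW \<subseteq> W" "V.span BW = W" using fd_basis[OF assms(2)] by metis
  have "setmul U W \<subseteq> V.span (setmul BU BW)"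
  proof
    fix z assume "z \<in> setmul U W"
    then obtain x y where z: "z = x * y" "x \<in> U" "y \<in> W" unfolding setmul_def by auto
    interpret H: module_hom "kscale \<phi>" "kscale \<phi>" "\<lambda>y. x * y" by (rule hom_l)
    have "(\<lambda>y. x * y) ` BW \<subseteq> V.span (setmul BU BW)"
    proof
      fix w assume "w \<in> (\<lambda>y. x * y) ` BW"
      then obtain b where b: "b \<in> BW" "w = x * b" by auto
      interpret H2: module_hom "kscale \<phi>" "kscale \<phi>" "\<lambda>y. y * b" by (rule hom_r)
      have "w \<in> (\<lambda>y. y * b) ` V.span BU" using b z(2) BU(3) by (intro image_eqI[of _ _ x]) simp_all
      also have "\<dots> = V.span ((\<lambda>y. y * b) ` BU)" using H2.span_image by simp
      also have "\<dots> \<subseteq> V.span (setmul BU BW)" by (rule V.span_mono) (use b in \<open>blast intro!: setmul_def[THEN eq_reflection, THEN meta_eq_to_obj_eq, THEN equalityD2, THEN subsetD]\<close>)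
      finally show "w \<in> V.span (setmul BU BW)" .
    qed
    then have "V.span ((\<lambda>y. x * y) ` BW) \<subseteq> V.span (setmul BU BW)"
      by (rule V.span_minimal) (rule V.subspace_span)
    moreover have "z \<in> (\<lambda>y. x * y) ` V.span BW" using z(1,3) BW(3) by (intro image_eqI[of _ _ y]) simp_all
    ultimately show "z \<in> V.span (setmul BU BW)" unfolding H.span_image[symmetric] by blast
  qed
  moreover have "setmul BU BW \<subseteq> setmul U W" using BU BW unfolding setmul_def by blast
  ultimately have "V.span (setmul U W) = V.span (setmul BU BW)"
    unfolding V.span_eq using V.span_superset[of "setmul U W"] by blast
  moreover have "finite (setmul BU BW)"
  proof -
    have "setmul BU BW = (\<lambda>(a,b). a * b) ` (BU \<times> BW)" unfolding setmul_def by auto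
    then show ?thesis using BU BW by simp
  qed
  ultimately show ?thesis unfolding fd_subspace_def by auto
qed

lemma span_sub:
  assumes "S \<subseteq> V.span T" shows "V.span S \<subseteq> V.span T"
  using V.span_minimal[OF assms V.subspace_span] .

lemma fd_nz: assumes "fd U" "U \<noteq> {0}" obtains u where "u \<in> U" "u \<noteq> 0"
  using assms V.subspace_0 unfolding fd_subspace_def by blast

lemma main:
  assumes fA: "fd A" and nA: "A \<noteq> {0}" and fB: "fd B" and nB: "B \<noteq> {0}"
  shows "\<exists>E F. fd E \<and> E \<noteq> {0} \<and> fd F \<and> F \<noteq> {0}
    \<and> V.span (setmul E F) \<subseteq> V.span (setmul A B)
    \<and> V.dim E + V.dim F \<ge> V.dim A + V.dim B
    \<and> (let D = setmul (invs E) E \<inter> setmul F (invs F)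
       in setmul E D = E \<and> setmul D F = F)"
proof -
  define AB where "AB = V.span (setmul A B)"
  have fAB: "fd AB" unfolding AB_def by (rule span_setmul[OF fA fB])
  define N where "N = V.dim AB"
  define valid where "valid p \<longleftrightarrow> fd (fst p) \<and> fst p \<noteq> {0} \<and> fd (snd p) \<and> snd p \<noteq> {0}
    \<and> V.span (setmul (fst p) (snd p)) \<subseteq> AB \<and> V.dim A + V.dim B \<le> V.dim (fst p) + V.dim (snd p)" for p
  define pot where "pot p = (V.dim (fst p) + V.dim (snd p)) * (N + 1) + V.dim (fst p)" for p
  have bnd: "V.dim E \<le> N \<and> V.dim F \<le> N" if "valid (E, F)" for E F
  proof -
    have v: "fd E" "E \<noteq> {0}" "fd F" "F \<noteq> {0}" "V.span (setmul E F) \<subseteq> AB"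
      using that unfolding valid_def by auto
    obtain f where f: "f \<in> F" "f \<noteq> 0" using fd_nz[OF v(3,4)] by blast
    obtain e where e: "e \<in> E" "e \<noteq> 0" using fd_nz[OF v(1,2)] by blast
    have "(\<lambda>x. x * f) ` E \<subseteq> AB" using f v(5) V.span_superset[of "setmul E F"]
      unfolding setmul_def by blast
    then have "V.dim ((\<lambda>x. x * f) ` E) \<le> N" unfolding N_def using dim_mono[OF fAB] by blast
    moreover have "(\<lambda>x. e * x) ` F \<subseteq> AB" using e v(5) V.span_superset[of "setmul E F"]
      unfolding setmul_def by blast
    then have "V.dim ((\<lambda>x. e * x) ` F) \<le> N" unfolding N_def using dim_mono[OF fAB] by blast
    ultimately show ?thesis using dim_image_r[OF v(1) f(2)] dim_image_l[OF v(3) e(2)] by simp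
  qed
  have pbnd: "pot p < (2 * N + 1) * (N + 1)" if "valid p" for p
  proof -
    obtain E F where p: "p = (E, F)" by (cases p)
    have b: "V.dim E \<le> N" "V.dim F \<le> N" using bnd that p by auto
    have "(V.dim E + V.dim F) * (N + 1) \<le> (2 * N) * (N + 1)" using b by (intro mult_right_mono) auto
    then show ?thesis unfolding pot_def p using b by (simp add: algebra_simps)
  qed
  have v0: "valid (A, B)" unfolding valid_def AB_def using fA nA fB nB by auto
  obtain p where pv: "valid p" and pmax: "\<And>q. valid q \<Longrightarrow> pot q \<le> pot p"
    using ex_has_greatest_nat[of valid "(A, B)" pot "(2 * N + 1) * (N + 1)"] v0 pbnd by blast
  obtain E F where p: "p = (E, F)" by (cases p)
  have fE: "fd E" and nE: "E \<noteq> {0}" and fF: "fd F" and nF: "F \<noteq> {0}"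
    and EF: "V.span (setmul E F) \<subseteq> AB" and dEF: "V.dim A + V.dim B \<le> V.dim E + V.dim F"
    using pv p unfolding valid_def by auto
  have sE: "V.subspace E" and sF: "V.subspace F" using fE fF unfolding fd_subspace_def by auto
  have bE: "V.dim E \<le> N" using bnd pv p by auto
  have maxv: "pot (E', F') \<le> pot (E, F)" if "valid (E', F')" for E' F' using pmax[OF that] p by simp
  define D where "D = setmul (invs E) E \<inter> setmul F (invs F)"
  have claim: "(\<lambda>x. x * g) ` E = E \<and> (\<lambda>x. g * x) ` F = F" if gD: "g \<in> D" and g0: "g \<noteq> 0" for g
  proof -
    obtain e0 e1 where e: "e0 \<in> E" "e0 \<noteq> 0" "e1 \<in> E" "g = inverse e0 * e1"
      using gD unfolding D_def setmul_def invs_def by auto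
    obtain f0 f1 where f: "f0 \<in> F" "f0 \<noteq> 0" "f1 \<in> F" "g = f1 * inverse f0"
      using gD unfolding D_def setmul_def invs_def by auto
    define Eg where "Eg = (\<lambda>x. x * g) ` E"
    define Fh where "Fh = (\<lambda>x. inverse g * x) ` F"
    have e1: "e1 = e0 * g"
    proof -
      have "e0 * g = (e0 * inverse e0) * e1" unfolding e(4) by (simp only: mult.assoc)
      then show ?thesis using e(2) by simp
    qed
    have e1nz: "e1 \<noteq> 0" unfolding e1 using e(2) g0 by simp
    have f0: "f0 = inverse g * f1"
    proof -
      have "g * f0 = f1 * (inverse f0 * f0)" unfolding f(4) by (simp only: mult.assoc)
      then have "g * f0 = f1" using f(2) by simp
      then have "inverse g * (g * f0) = inverse g * f1" by simp
      then show ?thesis using g0 by (simp add: mult.assoc[symmetric])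
    qed
    have fEg: "fd Eg" unfolding Eg_def by (rule fd_image_r[OF fE])
    have fFh: "fd Fh" unfolding Fh_def by (rule fd_image_l[OF fF])
    have dEg: "V.dim Eg = V.dim E" unfolding Eg_def by (rule dim_image_r[OF fE g0])
    have dFh: "V.dim Fh = V.dim F" unfolding Fh_def using g0 by (intro dim_image_l[OF fF]) simp
    have sEg: "V.subspace Eg" and sFh: "V.subspace Fh" using fEg fFh unfolding fd_subspace_def by auto
    define E1 where "E1 = V.span (E \<union> Eg)"
    define F1 where "F1 = F \<inter> Fh"
    define E2 where "E2 = E \<inter> Eg"
    define F2 where "F2 = V.span (F \<union> Fh)"
    have fE1: "fd E1" unfolding E1_def by (rule fd_span_Un[OF fE fEg])
    have fF2: "fd F2" unfolding F2_def by (rule fd_span_Un[OF fF fFh])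
    have fF1: "fd F1" unfolding F1_def by (rule sub_fd[OF fF V.subspace_inter[OF sF sFh]]) auto
    have fE2: "fd E2" unfolding E2_def by (rule sub_fd[OF fE V.subspace_inter[OF sE sEg]]) auto
    have EE1: "E \<subseteq> E1" unfolding E1_def using V.span_superset[of "E \<union> Eg"] by auto
    have FF2: "F \<subseteq> F2" unfolding F2_def using V.span_superset[of "F \<union> Fh"] by auto
    have nE1: "E1 \<noteq> {0}" using EE1 nE V.subspace_0[OF sE] by auto
    have nF2: "F2 \<noteq> {0}" using FF2 nF V.subspace_0[OF sF] by auto
    have "f0 \<in> F1" unfolding F1_def Fh_def using f(1,3) f0 by blast
    then have nF1: "F1 \<noteq> {0}" using f(2) by blast
    have "e1 \<in> E2" unfolding E2_def Eg_def using e(1,3) e1 by blast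
    then have nE2: "E2 \<noteq> {0}" using e1nz by blast
    have spE: "V.span E = E" and spF: "V.span F = F" and spEg: "V.span Eg = Eg" and spFh: "V.span Fh = Fh"
      using sE sF sEg sFh by auto
    have inEF: "x * y \<in> V.span (setmul E F)" if "x \<in> E" "y \<in> F" for x y
      using that V.span_superset[of "setmul E F"] unfolding setmul_def by blast
    have m1: "setmul E1 F1 \<subseteq> V.span (setmul E F)"
    proof
      fix z assume "z \<in> setmul E1 F1"
      then obtain x y where z: "z = x * y" "x \<in> E1" "y \<in> F1" unfolding setmul_def by auto
      obtain u w where uw: "x = u + w" "u \<in> E" "w \<in> Eg"
        using z(2) unfolding E1_def V.span_Un spE spEg by auto
      obtain v where v: "v \<in> E" "w = v * g" using uw unfolding Eg_def by auto
      obtain f' where f': "f' \<in> F" "y = inverse g * f'" using z(3) unfolding F1_def Fh_def by auto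
      have gy: "g * y = f'" using f' g0 by (simp add: mult.assoc[symmetric])
      have "z = u * y + v * (g * y)" using z uw v by (simp add: distrib_right mult.assoc)
      moreover have "u * y \<in> V.span (setmul E F)" using inEF uw z F1_def by auto
      moreover have "v * (g * y) \<in> V.span (setmul E F)" using inEF v gy f' by auto
      ultimately show "z \<in> V.span (setmul E F)" using V.span_add by auto
    qed
    have m2: "setmul E2 F2 \<subseteq> V.span (setmul E F)"
    proof
      fix z assume "z \<in> setmul E2 F2"
      then obtain x y where z: "z = x * y" "x \<in> E2" "y \<in> F2" unfolding setmul_def by auto
      obtain u w where uw: "y = u + w" "u \<in> F" "w \<in> Fh"
        using z(3) unfolding F2_def V.span_Un spF spFh by auto
      obtain f' where f': "f' \<in> F" "w = inverse g * f'" using uw unfolding Fh_def by auto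
      obtain v where v: "v \<in> E" "x = v * g" using z(2) unfolding E2_def Eg_def by auto
      have xw: "x * w = v * f'" using v f' g0 by (simp add: mult.assoc[symmetric]) (simp add: mult.assoc)
      have "z = x * u + x * w" using z uw by (simp add: distrib_left)
      moreover have "x * u \<in> V.span (setmul E F)" using inEF uw z E2_def by auto
      moreover have "x * w \<in> V.span (setmul E F)" using inEF v xw f' by auto
      ultimately show "z \<in> V.span (setmul E F)" using V.span_add by auto
    qed
    have AB1: "V.span (setmul E1 F1) \<subseteq> AB" using span_sub[OF m1] EF by (auto simp: V.span_span)
    have AB2: "V.span (setmul E2 F2) \<subseteq> AB" using span_sub[OF m2] EF by (auto simp: V.span_span)
    have g1: "V.dim E + V.dim Eg \<le> V.dim E1 + V.dim E2" unfolding E1_def E2_def by (rule grass[OF fE fEg])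
    have g2: "V.dim F + V.dim Fh \<le> V.dim F2 + V.dim F1" unfolding F1_def F2_def by (rule grass[OF fF fFh])
    have dE1: "V.dim E \<le> V.dim E1" using dim_mono[OF fE1 EE1] .
    show ?thesis
    proof (cases "V.dim E + V.dim F \<le> V.dim E1 + V.dim F1")
      case True
      then have "valid (E1, F1)" unfolding valid_def using fE1 nE1 fF1 nF1 AB1 dEF by auto
      then have pm: "pot (E1, F1) \<le> pot (E, F)" by (rule maxv)
      have "V.dim E1 = V.dim E"
      proof (rule ccontr)
        assume "V.dim E1 \<noteq> V.dim E"
        then have lt: "V.dim E < V.dim E1" using dE1 by simp
        have "(V.dim E + V.dim F) * (N + 1) \<le> (V.dim E1 + V.dim F1) * (N + 1)"
          using True by (rule mult_right_mono) simp
        then show False using pm lt unfolding pot_def by simp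
      qed
      then have "E1 = E" using dim_strict[OF fE1 sE EE1] by auto
      then have EgE: "Eg \<subseteq> E" unfolding E1_def using V.span_superset[of "E \<union> Eg"] by auto
      have "Eg = E" using dim_strict[OF fE sEg EgE] dEg by auto
      have "V.dim F \<le> V.dim F1" using True \<open>V.dim E1 = V.dim E\<close> by simp
      then have "F1 = F" using dim_strict[OF fF V.subspace_inter[OF sF sFh]] unfolding F1_def by fastforce
      then have FFh: "F \<subseteq> Fh" unfolding F1_def by auto
      then have "F = Fh" using dim_strict[OF fFh sF FFh] dFh by auto
      then have "(\<lambda>x. g * x) ` F = (\<lambda>x. g * x) ` Fh" by simp
      also have "\<dots> = F" unfolding Fh_def image_image using g0 by (simp add: mult.assoc[symmetric])
      finally show ?thesis using \<open>Eg = E\<close> unfolding Eg_def by simp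
    next
      case False
      then have lt: "V.dim E + V.dim F < V.dim E2 + V.dim F2" using g1 g2 dEg dFh by linarith
      then have "valid (E2, F2)" unfolding valid_def using fE2 nE2 fF2 nF2 AB2 dEF by auto
      then have pm: "pot (E2, F2) \<le> pot (E, F)" by (rule maxv)
      have "(V.dim E + V.dim F + 1) * (N + 1) \<le> (V.dim E2 + V.dim F2) * (N + 1)"
        using lt by (intro mult_right_mono) auto
      then show ?thesis using pm bE unfolding pot_def by (simp add: algebra_simps)
    qed
  qed
  obtain e where e: "e \<in> E" "e \<noteq> 0" using fd_nz[OF fE nE] by blast
  obtain f where f: "f \<in> F" "f \<noteq> 0" using fd_nz[OF fF nF] by blast
  have oneD: "1 \<in> D" unfolding D_def setmul_def invs_def
  proof
    show "1 \<in> {s * t |s t. s \<in> inverse ` (E - {0}) \<and> t \<in> E}"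
      using e by (intro CollectI exI[of _ "inverse e"] exI[of _ e]) auto
    show "1 \<in> {s * t |s t. s \<in> F \<and> t \<in> inverse ` (F - {0})}"
      using f by (intro CollectI exI[of _ f] exI[of _ "inverse f"]) auto
  qed
  have "setmul E D = E"
  proof
    show "setmul E D \<subseteq> E"
    proof
      fix z assume "z \<in> setmul E D"
      then obtain x d where z: "z = x * d" "x \<in> E" "d \<in> D" unfolding setmul_def by auto
      show "z \<in> E"
      proof (cases "d = 0")
        case True then show ?thesis using z V.subspace_0[OF sE] by simp
      next
        case False then show ?thesis using claim[OF z(3) False] z by blast
      qed
    qed
    show "E \<subseteq> setmul E D" using oneD unfolding setmul_def by force
  qed
  moreover have "setmul D F = F"
  proof
    show "setmul D F \<subseteq> F"
    proof
      fix z assume "z \<in> setmul D F"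
      then obtain d y where z: "z = d * y" "d \<in> D" "y \<in> F" unfolding setmul_def by auto
      show "z \<in> F"
      proof (cases "d = 0")
        case True then show ?thesis using z V.subspace_0[OF sF] by simp
      next
        case False then show ?thesis using claim[OF z(2) False] z by blast
      qed
    qed
    show "F \<subseteq> setmul D F" using oneD unfolding setmul_def by force
  qed
  ultimately show ?thesis using fE nE fF nF EF dEF unfolding AB_def D_def Let_def by blast
qed

end

theorem mainTheorem4:
  fixes \<phi> :: "'k::field \<Rightarrow> 'l::division_ring" and A B :: "'l set"
  assumes "central_hom \<phi>"
    and "fd_subspace \<phi> A" and "A \<noteq> {0}"
    and "fd_subspace \<phi> B" and "B \<noteq> {0}"
  shows "\<exists>E F. fd_subspace \<phi> E \<and> E \<noteq> {0} \<and> fd_subspace \<phi> F \<and> F \<noteq> {0}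
    \<and> kspan \<phi> (setmul E F) \<subseteq> kspan \<phi> (setmul A B)
    \<and> kdim \<phi> E + kdim \<phi> F \<ge> kdim \<phi> A + kdim \<phi> B
    \<and> (let D = setmul (invs E) E \<inter> setmul F (invs F)
       in setmul E D = E \<and> setmul D F = F)"
proof -
  interpret kd \<phi> by unfold_locales (rule assms(1))
  show ?thesis by (rule main[OF assms(2-5)])
qed

end
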